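(* Let $A$ be an $m \times m$ normal centrosymmetric nonnegative matrix with eigenvalues $\alpha_1, \ldots, \alpha_m$, where $\alpha_1$ is the Perron root of $A$ and there is a unit nonnegative eigenvector $u_1$ of $A$ for $\alpha_1$ with $Ju_1 = u_1$; let $B$ be an $n \times n$ normal centrosymmetric nonnegative matrix with eigenvalues $\beta_1, \ldots, \beta_n$, where $\beta_1$ is the Perron root of $B$ and there is a unit nonnegative eigenvector $v_1$ of $B$ for $\beta_1$ with $Jv_1 = v_1$. Assume $\alpha_1 \geq \beta_1$. If $a, b$ are real numbers with $\alpha_1 - \beta_1 \geq a \geq b$ and $a + b \leq 0$, then there is a normal centrosymmetric nonnegative matrix with eigenvalues $\alpha_1 - (a+b), \beta_1 + a, \beta_1 + b, \alpha_2, \ldots, \alpha_m, \beta_2, \ldots, \beta_n, \beta_2, \ldots, \beta_n$.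
   Context: $J$ denotes the reverse identity matrix (ones on the anti-diagonal, zeros elsewhere) of the appropriate size. A square matrix $Q$ is centrosymmetric if $JQJ = Q$, nonnegative if all entries are nonnegative, and normal if $QQ^* = Q^*Q$. The Perron root of a nonnegative matrix is its spectral radius, which is an eigenvalue. *)

theory Defs
  imports "Jordan_Normal_Form.Spectral_Radius"
begin

definition revid :: "nat \<Rightarrow> real mat" where
  "revid k = mat k k (\<lambda>(i,j). if i + j + 1 = k then 1 else 0)"

definition centrosymmetric :: "real mat \<Rightarrow> bool" where
  "centrosymmetric Q \<longleftrightarrow> revid (dim_row Q) * Q * revid (dim_row Q) = Q"

definition nonneg_mat :: "real mat \<Rightarrow> bool" where
  "nonneg_mat Q \<longleftrightarrow> (\<forall>i<dim_row Q. \<forall>j<dim_col Q. Q $$ (i,j) \<ge> 0)"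

text \<open>For real matrices the conjugate transpose is the transpose.\<close>
definition normal_mat :: "real mat \<Rightarrow> bool" where
  "normal_mat Q \<longleftrightarrow> Q * transpose_mat Q = transpose_mat Q * Q"

definition eigenvalues_list :: "real mat \<Rightarrow> complex list \<Rightarrow> bool" where
  "eigenvalues_list Q es \<longleftrightarrow>
     char_poly (map_mat complex_of_real Q) = (\<Prod>e\<leftarrow>es. [:- e, 1:])"

definition perron_root :: "real mat \<Rightarrow> real" where
  "perron_root Q = spectral_radius (map_mat complex_of_real Q)"

definition nonneg_vec :: "real vec \<Rightarrow> bool" where
  "nonneg_vec v \<longleftrightarrow> (\<forall>i<dim_vec v. v $ i \<ge> 0)"

definition is_unit_vector :: "real vec \<Rightarrow> bool" where
  "is_unit_vector v \<longleftrightarrow> v \<bullet> v = 1"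

end

theory Submission
  imports Defs
begin
lemma sylvester_det:
  fixes U V :: "real mat"
  assumes U: "U \<in> carrier_mat N r" and V: "V \<in> carrier_mat r N"
  shows "det (1\<^sub>m N - U * V) = det (1\<^sub>m r - V * U)"
proof -
  define M where "M = four_block_mat (1\<^sub>m N) U V (1\<^sub>m r)"
  have M: "M \<in> carrier_mat (N + r) (N + r)" unfolding M_def using U V by auto
  define L1 where "L1 = four_block_mat (1\<^sub>m N) (0\<^sub>m N r) (- V) (1\<^sub>m r)"
  define L2 where "L2 = four_block_mat (1\<^sub>m N) (- U) (0\<^sub>m r N) (1\<^sub>m r)"
  have L1: "L1 \<in> carrier_mat (N + r) (N + r)" unfolding L1_def using U V by auto
  have L2: "L2 \<in> carrier_mat (N + r) (N + r)" unfolding L2_def using U V by auto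
  have dL1: "det L1 = 1" unfolding L1_def
    by (subst det_four_block_mat_upper_right_zero[of _ N _ r], use V in auto)
  have dL2: "det L2 = 1" unfolding L2_def
    by (subst det_four_block_mat_lower_left_zero[of _ N _ r], use U in auto)
  have "L1 * M = four_block_mat (1\<^sub>m N * 1\<^sub>m N + 0\<^sub>m N r * V) (1\<^sub>m N * U + 0\<^sub>m N r * 1\<^sub>m r)
      (- V * 1\<^sub>m N + 1\<^sub>m r * V) (- V * U + 1\<^sub>m r * 1\<^sub>m r)"
    unfolding L1_def M_def by (rule mult_four_block_mat, use U V in auto)
  also have "\<dots> = four_block_mat (1\<^sub>m N) U (0\<^sub>m r N) (1\<^sub>m r - V * U)"
    by (rule cong_four_block_mat, use U V in auto)
  finally have e1: "L1 * M = four_block_mat (1\<^sub>m N) U (0\<^sub>m r N) (1\<^sub>m r - V * U)" .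
  have "L2 * M = four_block_mat (1\<^sub>m N * 1\<^sub>m N + - U * V) (1\<^sub>m N * U + - U * 1\<^sub>m r)
      (0\<^sub>m r N * 1\<^sub>m N + 1\<^sub>m r * V) (0\<^sub>m r N * U + 1\<^sub>m r * 1\<^sub>m r)"
    unfolding L2_def M_def by (rule mult_four_block_mat, use U V in auto)
  also have "\<dots> = four_block_mat (1\<^sub>m N - U * V) (0\<^sub>m N r) V (1\<^sub>m r)"
    by (rule cong_four_block_mat, use U V in auto)
  finally have e2: "L2 * M = four_block_mat (1\<^sub>m N - U * V) (0\<^sub>m N r) V (1\<^sub>m r)" .
  have "det M = det (L1 * M)" using det_mult[OF L1 M] dL1 by simp
  also have "\<dots> = det (1\<^sub>m r - V * U)" unfolding e1
    by (subst det_four_block_mat_lower_left_zero[of _ N _ r], use U V in auto)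
  finally have 1: "det M = det (1\<^sub>m r - V * U)" .
  have "det M = det (L2 * M)" using det_mult[OF L2 M] dL2 by simp
  also have "\<dots> = det (1\<^sub>m N - U * V)" unfolding e2
    by (subst det_four_block_mat_upper_right_zero[of _ N _ r], use U V in auto)
  finally show ?thesis using 1 by simp
qed

lemma rank_update_det:
  fixes X W Lam K :: "real mat" and x :: real
  assumes X: "X \<in> carrier_mat N N" and W: "W \<in> carrier_mat N r"
    and Lam: "Lam \<in> carrier_mat r r" and K: "K \<in> carrier_mat r r"
    and XW: "X * W = W * Lam"
    and nz: "det (x \<cdot>\<^sub>m 1\<^sub>m r - Lam) \<noteq> 0"
  shows "det (x \<cdot>\<^sub>m 1\<^sub>m N - (X + W * K * transpose_mat W)) * det (x \<cdot>\<^sub>m 1\<^sub>m r - Lam)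
       = det (x \<cdot>\<^sub>m 1\<^sub>m N - X) * det (x \<cdot>\<^sub>m 1\<^sub>m r - (Lam + K * (transpose_mat W * W)))"
proof -
  define M where "M = x \<cdot>\<^sub>m 1\<^sub>m N - X"
  define L where "L = x \<cdot>\<^sub>m 1\<^sub>m r - Lam"
  define G where "G = transpose_mat W * W"
  define Li where "Li = (1 / det L) \<cdot>\<^sub>m adj_mat L"
  have M: "M \<in> carrier_mat N N" unfolding M_def using X by auto
  have L: "L \<in> carrier_mat r r" unfolding L_def using Lam by auto
  have G: "G \<in> carrier_mat r r" unfolding G_def using W by auto
  have WT: "transpose_mat W \<in> carrier_mat r N" using W by auto
  have Li: "Li \<in> carrier_mat r r" unfolding Li_def using adj_mat(1)[OF L] by auto
  have LLi: "L * Li = 1\<^sub>m r" unfolding Li_def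
    using adj_mat(2)[OF L] nz[folded L_def] mult_smult_distrib[OF L adj_mat(1)[OF L]]
    by (auto simp: smult_smult_assoc)
  have MW: "M * W = W * L"
  proof -
    have "M * W = (x \<cdot>\<^sub>m 1\<^sub>m N) * W - X * W" unfolding M_def
      by (rule minus_mult_distrib_mat, use X W in auto)
    also have "\<dots> = W * (x \<cdot>\<^sub>m 1\<^sub>m r) - W * Lam" unfolding XW
      using W mult_smult_assoc_mat[OF one_carrier_mat W, of x] mult_smult_distrib[OF W one_carrier_mat, of x]
      by auto
    also have "\<dots> = W * L" unfolding L_def
      by (rule mult_minus_distrib_mat[symmetric], use W Lam in auto)
    finally show ?thesis .
  qed
  define Z where "Z = Li * K * transpose_mat W"
  have Z: "Z \<in> carrier_mat r N" unfolding Z_def using Li K W by auto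
  have MWZ: "M * (W * Z) = W * K * transpose_mat W"
  proof -
    have KW: "K * transpose_mat W \<in> carrier_mat r N" using K WT by auto
    have Zeq: "Z = Li * (K * transpose_mat W)" unfolding Z_def using assoc_mult_mat[OF Li K WT] .
    have LZ: "L * Z = K * transpose_mat W" unfolding Zeq
      using assoc_mult_mat[OF L Li KW, symmetric] LLi left_mult_one_mat[OF KW] by simp
    have "M * (W * Z) = (M * W) * Z" using assoc_mult_mat[OF M W Z] by simp
    also have "\<dots> = W * (L * Z)" unfolding MW using assoc_mult_mat[OF W L Z] .
    also have "\<dots> = W * K * transpose_mat W" unfolding LZ using assoc_mult_mat[OF W K WT] by simp
    finally show ?thesis .
  qed
  have e1: "x \<cdot>\<^sub>m 1\<^sub>m N - (X + W * K * transpose_mat W) = M * (1\<^sub>m N - W * Z)"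
  proof -
    have "M * (1\<^sub>m N - W * Z) = M * 1\<^sub>m N - M * (W * Z)"
      by (rule mult_minus_distrib_mat, use M W Z in auto)
    also have "\<dots> = M - W * K * transpose_mat W" unfolding MWZ using M by simp
    finally show ?thesis unfolding M_def using X W K by (intro eq_matI, auto)
  qed
  have "det (x \<cdot>\<^sub>m 1\<^sub>m N - (X + W * K * transpose_mat W)) = det M * det (1\<^sub>m N - W * Z)"
    unfolding e1 by (rule det_mult[OF M], use W Z in auto)
  also have "det (1\<^sub>m N - W * Z) = det (1\<^sub>m r - Z * W)" by (rule sylvester_det[OF W Z])
  also have "Z * W = Li * (K * G)" unfolding Z_def G_def
    using assoc_mult_mat[OF Li K WT] assoc_mult_mat[OF Li _ W, of "K * transpose_mat W"]
       assoc_mult_mat[OF K WT W] K WT by simp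
  finally have e2: "det (x \<cdot>\<^sub>m 1\<^sub>m N - (X + W * K * transpose_mat W)) = det M * det (1\<^sub>m r - Li * (K * G))" .
  have KG: "K * G \<in> carrier_mat r r" using K G by auto
  have "L * (1\<^sub>m r - Li * (K * G)) = L * 1\<^sub>m r - L * (Li * (K * G))"
    by (rule mult_minus_distrib_mat, use L Li KG in auto)
  also have "\<dots> = L - K * G" using L Li KG LLi assoc_mult_mat[OF L Li KG, symmetric] left_mult_one_mat[OF KG] right_mult_one_mat[OF L] by simp
  also have "\<dots> = x \<cdot>\<^sub>m 1\<^sub>m r - (Lam + K * G)" unfolding L_def using Lam KG K G by (intro eq_matI, auto)
  finally have e3: "L * (1\<^sub>m r - Li * (K * G)) = x \<cdot>\<^sub>m 1\<^sub>m r - (Lam + K * G)" .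
  have "det (x \<cdot>\<^sub>m 1\<^sub>m r - (Lam + K * G)) = det L * det (1\<^sub>m r - Li * (K * G))"
  proof -
    have "Li * (K * G) \<in> carrier_mat r r" using Li KG by (rule mult_carrier_mat)
    hence c: "1\<^sub>m r - Li * (K * G) \<in> carrier_mat r r" by (rule minus_carrier_mat)
    show ?thesis unfolding e3[symmetric] by (rule det_mult[OF L c])
  qed
  then show ?thesis unfolding e2 G_def[symmetric] M_def[symmetric] L_def[symmetric] by simp
qed

lemma poly_char_poly_det:
  fixes A :: "real mat"
  assumes A: "A \<in> carrier_mat n n"
  shows "poly (char_poly A) x = det (x \<cdot>\<^sub>m 1\<^sub>m n - A)"
proof -
  have "- char_matrix A x = x \<cdot>\<^sub>m 1\<^sub>m n - A"
    using A by (intro eq_matI, auto simp: char_matrix_def)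
  thus ?thesis using char_poly_matrix[OF A] by simp
qed

lemma poly_eq_except_finite:
  fixes p q :: "real poly"
  assumes S: "finite S" and eq: "\<And>x. x \<notin> S \<Longrightarrow> poly p x = poly q x"
  shows "p = q"
proof (rule ccontr)
  assume "p \<noteq> q"
  hence "p - q \<noteq> 0" by simp
  hence fin: "finite {x. poly (p - q) x = 0}" by (rule poly_roots_finite)
  have "UNIV \<subseteq> S \<union> {x. poly (p - q) x = 0}" using eq by auto
  hence "finite (UNIV :: real set)" using fin S finite_subset by blast
  thus False using infinite_UNIV_char_0 by blast
qed

lemma rank_update_char_poly:
  fixes X W Lam K :: "real mat"
  assumes X: "X \<in> carrier_mat N N" and W: "W \<in> carrier_mat N r"
    and Lam: "Lam \<in> carrier_mat r r" and K: "K \<in> carrier_mat r r"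
    and XW: "X * W = W * Lam"
  shows "char_poly (X + W * K * transpose_mat W) * char_poly Lam
       = char_poly X * char_poly (Lam + K * (transpose_mat W * W))"
proof (rule poly_eq_except_finite)
  have "char_poly Lam \<noteq> 0" using degree_monic_char_poly[OF Lam] by auto
  thus "finite {x. poly (char_poly Lam) x = 0}" by (rule poly_roots_finite)
next
  fix x
  assume "x \<notin> {x. poly (char_poly Lam) x = 0}"
  hence nz: "det (x \<cdot>\<^sub>m 1\<^sub>m r - Lam) \<noteq> 0" using poly_char_poly_det[OF Lam] by auto
  have Y: "X + W * K * transpose_mat W \<in> carrier_mat N N" using X W K by auto
  have T: "Lam + K * (transpose_mat W * W) \<in> carrier_mat r r" using Lam K W by auto
  show "poly (char_poly (X + W * K * transpose_mat W) * char_poly Lam) x =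
        poly (char_poly X * char_poly (Lam + K * (transpose_mat W * W))) x"
    unfolding poly_mult poly_char_poly_det[OF Y] poly_char_poly_det[OF Lam]
      poly_char_poly_det[OF X] poly_char_poly_det[OF T]
    by (rule rank_update_det[OF X W Lam K XW nz])
qed

lemma sum_revid_delta:
  fixes f :: "nat \<Rightarrow> real"
  assumes i: "i < k"
  shows "(\<Sum>l\<in>{0..<k}. (if i + l + 1 = k then 1 else 0) * f l) = f (k - 1 - i)"
proof -
  have "(\<Sum>l\<in>{0..<k}. (if i + l + 1 = k then 1 else 0) * f l) = (\<Sum>l\<in>{0..<k}. if l = k - 1 - i then f l else 0)"
    by (rule sum.cong, use i in auto)
  also have "\<dots> = f (k - 1 - i)" using i by (subst sum.delta, auto)
  finally show ?thesis .
qed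

lemma sum_revid_delta':
  fixes f :: "nat \<Rightarrow> real"
  assumes i: "j < k"
  shows "(\<Sum>l\<in>{0..<k}. f l * (if l + j + 1 = k then 1 else 0)) = f (k - 1 - j)"
proof -
  have "(\<Sum>l\<in>{0..<k}. f l * (if l + j + 1 = k then 1 else 0)) = (\<Sum>l\<in>{0..<k}. if l = k - 1 - j then f l else 0)"
    by (rule sum.cong, use i in auto)
  also have "\<dots> = f (k - 1 - j)" using i by (subst sum.delta, auto)
  finally show ?thesis .
qed

lemma revid_carrier[simp]: "revid k \<in> carrier_mat k k" unfolding revid_def by auto
lemma revid_dims[simp]: "dim_row (revid k) = k" "dim_col (revid k) = k" unfolding revid_def by auto

lemma revid_mult_vec:
  assumes x: "x \<in> carrier_vec k" and i: "i < k"
  shows "(revid k *\<^sub>v x) $ i = x $ (k - 1 - i)"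
  using x i sum_revid_delta[OF i, of "\<lambda>l. x $ l"]
  by (auto simp: revid_def mult_mat_vec_def scalar_prod_def)

lemma revid_conj_index:
  assumes Q: "Q \<in> carrier_mat k k" and i: "i < k" and j: "j < k"
  shows "(revid k * Q * revid k) $$ (i, j) = Q $$ (k - 1 - i, k - 1 - j)"
proof -
  have RQ: "(revid k * Q) $$ (i', j') = Q $$ (k - 1 - i', j')" if "i' < k" "j' < k" for i' j'
    using Q that sum_revid_delta[OF that(1), of "\<lambda>l. Q $$ (l, j')"]
    by (auto simp: revid_def scalar_prod_def)
  have "(revid k * Q * revid k) $$ (i, j) = (\<Sum>l\<in>{0..<k}. (revid k * Q) $$ (i, l) * (if l + j + 1 = k then 1 else 0))"
    using Q i j by (auto simp: revid_def scalar_prod_def)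
  also have "\<dots> = (\<Sum>l\<in>{0..<k}. Q $$ (k - 1 - i, l) * (if l + j + 1 = k then 1 else 0))"
    by (rule sum.cong, use RQ i in auto)
  also have "\<dots> = Q $$ (k - 1 - i, k - 1 - j)" by (rule sum_revid_delta'[OF j])
  finally show ?thesis .
qed

lemma centrosymmetric_iff:
  assumes Q: "Q \<in> carrier_mat k k"
  shows "centrosymmetric Q \<longleftrightarrow> (\<forall>i<k. \<forall>j<k. Q $$ (k - 1 - i, k - 1 - j) = Q $$ (i, j))"
proof -
  have "centrosymmetric Q \<longleftrightarrow> revid k * Q * revid k = Q"
    using Q unfolding centrosymmetric_def by auto
  also have "\<dots> \<longleftrightarrow> (\<forall>i<k. \<forall>j<k. Q $$ (k - 1 - i, k - 1 - j) = Q $$ (i, j))"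
  proof
    assume "revid k * Q * revid k = Q"
    thus "\<forall>i<k. \<forall>j<k. Q $$ (k - 1 - i, k - 1 - j) = Q $$ (i, j)"
      using revid_conj_index[OF Q] by metis
  next
    assume h: "\<forall>i<k. \<forall>j<k. Q $$ (k - 1 - i, k - 1 - j) = Q $$ (i, j)"
    show "revid k * Q * revid k = Q"
      by (rule eq_matI, use Q h revid_conj_index[OF Q] in auto)
  qed
  finally show ?thesis .
qed

lemma revid_fix_iff:
  assumes x: "x \<in> carrier_vec k"
  shows "revid k *\<^sub>v x = x \<longleftrightarrow> (\<forall>i<k. x $ (k - 1 - i) = x $ i)"
proof
  assume "revid k *\<^sub>v x = x"
  thus "\<forall>i<k. x $ (k - 1 - i) = x $ i" using revid_mult_vec[OF x] by metis
next
  assume h: "\<forall>i<k. x $ (k - 1 - i) = x $ i"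
  show "revid k *\<^sub>v x = x" by (rule eq_vecI, use x h revid_mult_vec[OF x] in auto)
qed

lemma normal_eigvec_transpose:
  fixes Q :: "real mat"
  assumes Q: "Q \<in> carrier_mat k k" and nQ: "Q * transpose_mat Q = transpose_mat Q * Q"
    and x: "x \<in> carrier_vec k" and ev: "Q *\<^sub>v x = e \<cdot>\<^sub>v x"
  shows "transpose_mat Q *\<^sub>v x = e \<cdot>\<^sub>v x"
proof -
  define z where "z = transpose_mat Q *\<^sub>v x"
  have QT: "transpose_mat Q \<in> carrier_mat k k" using Q by auto
  have z: "z \<in> carrier_vec k" unfolding z_def using Q x by auto
  have ex: "e \<cdot>\<^sub>v x \<in> carrier_vec k" using x by auto
  have zz: "z \<bullet> z = e * e * (x \<bullet> x)"
  proof -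
    have "z \<bullet> z = x \<bullet> (Q *\<^sub>v z)" unfolding z_def
      by (rule transpose_vec_mult_scalar[OF Q _ x], use QT x in auto)
    also have "Q *\<^sub>v z = (Q * transpose_mat Q) *\<^sub>v x" unfolding z_def using Q x by auto
    also have "\<dots> = transpose_mat Q *\<^sub>v (Q *\<^sub>v x)" unfolding nQ using Q x by auto
    also have "\<dots> = e \<cdot>\<^sub>v z" unfolding ev z_def using QT x by (auto simp: mult_mat_vec)
    also have "x \<bullet> (e \<cdot>\<^sub>v z) = e * (x \<bullet> z)" using x z by auto
    also have "x \<bullet> z = z \<bullet> x" using x z by (rule comm_scalar_prod)
    also have "z \<bullet> x = x \<bullet> (Q *\<^sub>v x)" unfolding z_def by (rule transpose_vec_mult_scalar[OF Q x x])
    also have "\<dots> = e * (x \<bullet> x)" unfolding ev using x by auto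
    finally show ?thesis by simp
  qed
  have xz: "x \<bullet> z = e * (x \<bullet> x)"
  proof -
    have "x \<bullet> z = z \<bullet> x" using x z by (rule comm_scalar_prod)
    also have "z \<bullet> x = x \<bullet> (Q *\<^sub>v x)" unfolding z_def by (rule transpose_vec_mult_scalar[OF Q x x])
    also have "\<dots> = e * (x \<bullet> x)" unfolding ev using x by auto
    finally show ?thesis .
  qed
  define y where "y = z - e \<cdot>\<^sub>v x"
  have y: "y \<in> carrier_vec k" unfolding y_def using z x by auto
  have "y \<bullet> y = z \<bullet> z - z \<bullet> (e \<cdot>\<^sub>v x) - ((e \<cdot>\<^sub>v x) \<bullet> z - (e \<cdot>\<^sub>v x) \<bullet> (e \<cdot>\<^sub>v x))"
    unfolding y_def
    using minus_scalar_prod_distrib[OF z ex y] scalar_prod_minus_distrib[OF z z ex]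
      scalar_prod_minus_distrib[OF ex z ex] z ex
    by (simp add: y_def[symmetric])
  also have "\<dots> = 0" using zz xz comm_scalar_prod[OF x z] x z by (simp add: algebra_simps)
  finally have yy: "y \<bullet> y = 0" .
  have yi: "y $ i = 0" if i: "i < k" for i
  proof -
    have "(\<Sum>l\<in>{0..<k}. y $ l * y $ l) = 0" using yy y by (simp add: scalar_prod_def)
    hence "\<forall>l\<in>{0..<k}. y $ l * y $ l = 0" by (subst sum_nonneg_eq_0_iff[symmetric], auto)
    thus "y $ i = 0" using i by auto
  qed
  show ?thesis unfolding z_def[symmetric]
  proof (rule eq_vecI)
    fix i assume i: "i < dim_vec (e \<cdot>\<^sub>v x)"
    hence "y $ i = 0" using yi x by auto
    thus "z $ i = (e \<cdot>\<^sub>v x) $ i" using i z x unfolding y_def by auto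
  qed (use z x in auto)
qed

lemma char_poly_block_diag:
  fixes A B :: "'a :: idom mat"
  assumes A: "A \<in> carrier_mat n n" and B: "B \<in> carrier_mat m m"
  shows "char_poly (four_block_mat A (0\<^sub>m n m) (0\<^sub>m m n) B) = char_poly A * char_poly B"
proof -
  have "char_poly_matrix (four_block_mat A (0\<^sub>m n m) (0\<^sub>m m n) B)
      = four_block_mat (char_poly_matrix A) (0\<^sub>m n m) (0\<^sub>m m n) (char_poly_matrix B)"
    by (rule eq_matI, use A B in \<open>auto simp: char_poly_matrix_def\<close>)
  thus ?thesis unfolding char_poly_def
    by (simp, subst det_four_block_mat_lower_left_zero[of _ n _ m], use A B in auto)
qed

definition diagm :: "real list \<Rightarrow> real mat" where
  "diagm ls = mat (length ls) (length ls) (\<lambda>(i,j). if i = j then ls ! i else 0)"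

lemma diagm_carrier[simp]: "diagm ls \<in> carrier_mat (length ls) (length ls)"
  unfolding diagm_def by auto

lemma mat_cols_eig:
  fixes X :: "real mat"
  assumes X: "X \<in> carrier_mat N N" and ws: "set ws \<subseteq> carrier_vec N"
    and len: "length ls = length ws"
    and ev: "\<And>j. j < length ws \<Longrightarrow> X *\<^sub>v (ws ! j) = (ls ! j) \<cdot>\<^sub>v (ws ! j)"
  shows "X * mat_of_cols N ws = mat_of_cols N ws * diagm ls"
proof (rule eq_matI)
  fix i j assume i: "i < dim_row (mat_of_cols N ws * diagm ls)"
    and j: "j < dim_col (mat_of_cols N ws * diagm ls)"
  have i': "i < N" and j': "j < length ws" using i j len by (auto simp: diagm_def)
  have wj: "ws ! j \<in> carrier_vec N" using ws j' by auto
  have "(X * mat_of_cols N ws) $$ (i, j) = row X i \<bullet> (ws ! j)"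
    using X i' j' by (auto simp: col_mat_of_cols[OF j' wj])
  also have "\<dots> = (X *\<^sub>v (ws ! j)) $ i" using X i' by auto
  also have "\<dots> = ls ! j * (ws ! j) $ i" unfolding ev[OF j'] using wj i' by auto
  finally have l: "(X * mat_of_cols N ws) $$ (i, j) = ls ! j * (ws ! j) $ i" .
  have "(mat_of_cols N ws * diagm ls) $$ (i, j) = (\<Sum>l\<in>{0..<length ws}. (ws ! l) $ i * (if l = j then ls ! j else 0))"
    using i' j' len by (auto simp: diagm_def scalar_prod_def mat_of_cols_def intro!: sum.cong)
  also have "\<dots> = (\<Sum>l\<in>{0..<length ws}. if l = j then (ws ! j) $ i * ls ! j else 0)"
    by (rule sum.cong, auto)
  also have "\<dots> = ls ! j * (ws ! j) $ i" using j' by (subst sum.delta, auto)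
  finally show "(X * mat_of_cols N ws) $$ (i, j) = (mat_of_cols N ws * diagm ls) $$ (i, j)" using l by simp
qed (use X len in \<open>auto simp: diagm_def\<close>)

lemma normal_update:
  fixes D W K :: "real mat"
  assumes D: "D \<in> carrier_mat N N" and W: "W \<in> carrier_mat N r" and K: "K \<in> carrier_mat r r"
    and KT: "transpose_mat K = K"
    and DW: "D * W = transpose_mat D * W"
    and nD: "D * transpose_mat D = transpose_mat D * D"
  shows "normal_mat (D + W * K * transpose_mat W)"
proof -
  define P where "P = W * K * transpose_mat W"
  have WT: "transpose_mat W \<in> carrier_mat r N" using W by auto
  have DT: "transpose_mat D \<in> carrier_mat N N" using D by auto
  have P: "P \<in> carrier_mat N N" unfolding P_def using W K by auto
  have PT: "transpose_mat P = P" unfolding P_def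
    using transpose_mult[OF mult_carrier_mat[OF W K] WT] transpose_mult[OF W K] KT W K
    by (simp add: assoc_mult_mat[OF W K WT])
  have WK: "W * K \<in> carrier_mat N r" using W K by auto
  have e1: "D * P = transpose_mat D * P"
  proof -
    have "D * P = (D * W) * (K * transpose_mat W)" unfolding P_def
      using assoc_mult_mat[OF W K WT] assoc_mult_mat[OF D W, of "K * transpose_mat W" N] K WT by auto
    also have "\<dots> = transpose_mat D * P" unfolding DW P_def
      using assoc_mult_mat[OF W K WT] assoc_mult_mat[OF DT W, of "K * transpose_mat W" N] K WT by auto
    finally show ?thesis .
  qed
  have e2: "P * transpose_mat D = P * D"
  proof -
    have "P * transpose_mat D = W * K * (transpose_mat W * transpose_mat D)" unfolding P_def
      using assoc_mult_mat[OF WK WT DT] by simp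
    also have "transpose_mat W * transpose_mat D = transpose_mat (D * W)"
      using transpose_mult[OF D W] by simp
    also have "\<dots> = transpose_mat (transpose_mat D * W)" unfolding DW ..
    also have "\<dots> = transpose_mat W * D" using transpose_mult[OF DT W] by simp
    also have "W * K * (transpose_mat W * D) = P * D" unfolding P_def
      using assoc_mult_mat[OF WK WT D] by simp
    finally show ?thesis .
  qed
  have T: "transpose_mat (D + P) = transpose_mat D + P" using transpose_add[OF D P] PT by simp
  have "(D + P) * (transpose_mat D + P) = D * transpose_mat D + D * P + (P * transpose_mat D + P * P)"
    unfolding add_mult_distrib_mat[OF D P add_carrier_mat[of P N N "transpose_mat D", OF P]]
      mult_add_distrib_mat[OF D DT P] mult_add_distrib_mat[OF P DT P] ..
  also have "\<dots> = transpose_mat D * D + transpose_mat D * P + (P * D + P * P)" unfolding e1 e2 nD ..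
  also have "\<dots> = (transpose_mat D + P) * (D + P)"
    unfolding add_mult_distrib_mat[OF DT P add_carrier_mat[of P N N D, OF P]]
      mult_add_distrib_mat[OF DT D P] mult_add_distrib_mat[OF P D P] ..
  finally show ?thesis unfolding normal_mat_def P_def[symmetric] T .
qed

abbreviation bdiag :: "real mat \<Rightarrow> real mat \<Rightarrow> real mat" where
  "bdiag A B \<equiv> four_block_mat A (0\<^sub>m (dim_row A) (dim_col B)) (0\<^sub>m (dim_row B) (dim_col A)) B"

lemma smult_append_vec: "c \<cdot>\<^sub>v (x @\<^sub>v y) = (c \<cdot>\<^sub>v x) @\<^sub>v (c \<cdot>\<^sub>v (y :: real vec))"
  by (rule eq_vecI, auto)

lemma bdiag_eig:
  assumes A: "A \<in> carrier_mat n n" and B: "B \<in> carrier_mat m m"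
    and a: "a \<in> carrier_vec n" and b: "b \<in> carrier_vec m"
    and ea: "A *\<^sub>v a = e \<cdot>\<^sub>v a" and eb: "B *\<^sub>v b = e \<cdot>\<^sub>v b"
  shows "bdiag A B *\<^sub>v (a @\<^sub>v b) = e \<cdot>\<^sub>v (a @\<^sub>v b)"
  using mult_mat_vec_split[OF A B a b] A B ea eb by (simp add: smult_append_vec)

lemma bdiag_carrier:
  assumes A: "A \<in> carrier_mat n n" and B: "B \<in> carrier_mat m m"
  shows "bdiag A B \<in> carrier_mat (n + m) (n + m)"
  using A B by auto

lemma bdiag_transpose:
  assumes A: "A \<in> carrier_mat n n" and B: "B \<in> carrier_mat m m"
  shows "transpose_mat (bdiag A B) = bdiag (transpose_mat A) (transpose_mat B)"
  using transpose_four_block_mat[of A n n "0\<^sub>m n m" m "0\<^sub>m m n" m B] A B by auto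

lemma bdiag_normal:
  assumes A: "A \<in> carrier_mat n n" and B: "B \<in> carrier_mat m m"
    and nA: "A * transpose_mat A = transpose_mat A * A"
    and nB: "B * transpose_mat B = transpose_mat B * B"
  shows "bdiag A B * transpose_mat (bdiag A B) = transpose_mat (bdiag A B) * bdiag A B"
proof -
  have AT: "transpose_mat A \<in> carrier_mat n n" and BT: "transpose_mat B \<in> carrier_mat m m" using A B by auto
  have dA: "dim_row A = n" "dim_col A = n" and dB: "dim_row B = m" "dim_col B = m" using A B by auto
  have "bdiag A B * transpose_mat (bdiag A B) = four_block_mat A (0\<^sub>m n m) (0\<^sub>m m n) B * four_block_mat (transpose_mat A) (0\<^sub>m n m) (0\<^sub>m m n) (transpose_mat B)"
    unfolding bdiag_transpose[OF A B] using A B by simp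
  also have "\<dots> = four_block_mat (A * transpose_mat A + 0\<^sub>m n m * 0\<^sub>m m n) (A * 0\<^sub>m n m + 0\<^sub>m n m * transpose_mat B)
     (0\<^sub>m m n * transpose_mat A + B * 0\<^sub>m m n) (0\<^sub>m m n * 0\<^sub>m n m + B * transpose_mat B)"
    by (rule mult_four_block_mat, use A B in auto)
  also have "\<dots> = four_block_mat (A * transpose_mat A) (0\<^sub>m n m) (0\<^sub>m m n) (B * transpose_mat B)"
    by (rule cong_four_block_mat, use A B in auto)
  also have "\<dots> = four_block_mat (transpose_mat A * A + 0\<^sub>m n m * 0\<^sub>m m n) (transpose_mat A * 0\<^sub>m n m + 0\<^sub>m n m * B)
     (0\<^sub>m m n * A + transpose_mat B * 0\<^sub>m m n) (0\<^sub>m m n * 0\<^sub>m n m + transpose_mat B * B)"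
    unfolding nA nB by (rule cong_four_block_mat, use A B in auto)
  also have "\<dots> = four_block_mat (transpose_mat A) (0\<^sub>m n m) (0\<^sub>m m n) (transpose_mat B) * four_block_mat A (0\<^sub>m n m) (0\<^sub>m m n) B"
    by (rule mult_four_block_mat[symmetric], use A B in auto)
  also have "\<dots> = transpose_mat (bdiag A B) * bdiag A B"
    unfolding bdiag_transpose[OF A B] using A B by simp
  finally show ?thesis .
qed

lemma app3_index:
  assumes p: "p \<in> carrier_vec n" and q: "q \<in> carrier_vec m" and s: "s \<in> carrier_vec k"
    and t: "t < n + (m + k)"
  shows "(p @\<^sub>v (q @\<^sub>v s)) $ t = (if t < n then p $ t else if t < n + m then q $ (t - n) else s $ (t - n - m))"
  using p q s t by auto

lemma det3: assumes "(A::'a::comm_ring_1 mat) \<in> carrier_mat 3 3"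
  shows "det A = A$$(0,0) * (A$$(1,1) * A$$(2,2) - A$$(1,2)*A$$(2,1))
     - A$$(0,1) * (A$$(1,0) * A$$(2,2) - A$$(1,2)*A$$(2,0))
     + A$$(0,2) * (A$$(1,0) * A$$(2,1) - A$$(1,1)*A$$(2,0))"
  using assms
  apply (subst laplace_expansion_row[OF assms, of 0])
  apply (auto simp: cofactor_def eval_nat_numeral)
  apply (subst (1 2 3) laplace_expansion_row[of _ 2 0])
  apply (auto simp: mat_delete_def algebra_simps cofactor_def eval_nat_numeral det_single)
  done

lemma less3: "(i::nat) < 3 \<longleftrightarrow> i = 0 \<or> i = 1 \<or> i = 2" by auto

lemma refl3:
  fixes p q s :: "nat \<Rightarrow> real"
  assumes t: "t < n + (m + n)" and t': "t' = n + (m + n) - 1 - t"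
  shows "(if t' < n then p t' else if t' < n + m then q (t' - n) else s (t' - n - m))
    = (if t < n then s (n - 1 - t) else if t < n + m then q (m - 1 - (t - n)) else p (n - 1 - (t - n - m)))"
proof (cases "t < n")
  case True
  hence "\<not> t' < n" "\<not> t' < n + m" "t' - n - m = n - 1 - t" unfolding t' by auto
  thus ?thesis using True by simp
next
  case False
  show ?thesis
  proof (cases "t < n + m")
    case True
    hence "\<not> t' < n" "t' < n + m" "t' - n = m - 1 - (t - n)" unfolding t' using False by auto
    thus ?thesis using True False by simp
  next
    case False2: False
    hence "t' < n" "t' = n - 1 - (t - n - m)" unfolding t' using False t by auto
    thus ?thesis using False False2 by simp
  qed
qed

lemma refl_cases:
  fixes n m t t' :: nat
  assumes t: "t < n + (m + n)" and t': "t' = n + (m + n) - 1 - t"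
  shows "(t < n \<and> \<not> t' < n \<and> \<not> t' < n + m \<and> t' - n - m = n - 1 - t) \<or>
         (\<not> t < n \<and> t < n + m \<and> \<not> t' < n \<and> t' < n + m \<and> t' - n = m - 1 - (t - n)) \<or>
         (\<not> t < n \<and> \<not> t < n + m \<and> t' < n \<and> t' = n - 1 - (t - n - m))"
proof (cases "t < n")
  case True
  hence "\<not> t' < n" "\<not> t' < n + m" "t' - n - m = n - 1 - t" unfolding t' by auto
  thus ?thesis using True by blast
next
  case False
  show ?thesis
  proof (cases "t < n + m")
    case True
    hence "\<not> t' < n" "t' < n + m" "t' - n = m - 1 - (t - n)" unfolding t' using False by auto
    thus ?thesis using True False by blast
  next
    case False2: False
    hence "t' < n" "t' = n - 1 - (t - n - m)" unfolding t' using False t by auto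
    thus ?thesis using False False2 by blast
  qed
qed

lemma dform_sym:
  fixes F G :: "nat \<Rightarrow> nat \<Rightarrow> real"
  assumes i: "i < n + (m + n)" and i': "i' = n + (m + n) - 1 - i"
    and j: "j < n + (m + n)" and j': "j' = n + (m + n) - 1 - j"
    and F: "\<And>x y. x < n \<Longrightarrow> y < n \<Longrightarrow> F (n - 1 - x) (n - 1 - y) = F x y"
    and G: "\<And>x y. x < m \<Longrightarrow> y < m \<Longrightarrow> G (m - 1 - x) (m - 1 - y) = G x y"
  defines "df \<equiv> \<lambda>a b. (if a < n then (if b < n then F a b else 0) else if a < n + m then
      (if n \<le> b \<and> b < n + m then G (a - n) (b - n) else 0) else (if n + m \<le> b then F (a - n - m) (b - n - m) else 0))"
  shows "df i' j' = df i j"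
proof -
  note ci = refl_cases[OF i i'] and cj = refl_cases[OF j j']
  have dA: ?thesis if ij: "i < n" "j < n"
  proof -
    define x where "x = n - 1 - i"
    define y where "y = n - 1 - j"
    have e: "i' = n + m + x" "j' = n + m + y" "x < n" "y < n" unfolding x_def y_def i' j' using ij by auto
    have "df i' j' = F x y" unfolding df_def e by simp
    also have "\<dots> = F i j" unfolding x_def y_def by (rule F[OF ij])
    also have "\<dots> = df i j" unfolding df_def using ij by simp
    finally show ?thesis .
  qed
  have dB: ?thesis if ij: "n \<le> i" "i < n + m" "n \<le> j" "j < n + m"
  proof -
    define a where "a = i - n"
    define b where "b = j - n"
    define x where "x = m - 1 - a"
    define y where "y = m - 1 - b"
    have e: "i = n + a" "j = n + b" "i' = n + x" "j' = n + y" "x < m" "y < m" "a < m" "b < m"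
      unfolding x_def y_def a_def b_def i' j' using ij by auto
    have "df i' j' = G x y" unfolding df_def e using e(5,6) by simp
    also have "\<dots> = G a b" unfolding x_def y_def by (rule G, use e in auto)
    also have "\<dots> = df i j" unfolding df_def e using e(7,8) by simp
    finally show ?thesis .
  qed
  have dC: ?thesis if ij: "n + m \<le> i" "n + m \<le> j"
  proof -
    define a where "a = i - n - m"
    define b where "b = j - n - m"
    define x where "x = n - 1 - a"
    define y where "y = n - 1 - b"
    have e: "i = n + m + a" "j = n + m + b" "i' = x" "j' = y" "x < n" "y < n" "a < n" "b < n"
      unfolding x_def y_def a_def b_def i' j' using ij i j by auto
    have "df i' j' = F x y" unfolding df_def e using e(5,6) by simp
    also have "\<dots> = F a b" unfolding x_def y_def by (rule F, use e in auto)
    also have "\<dots> = df i j" unfolding df_def e using e(7,8) by simp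
    finally show ?thesis .
  qed
  define blk where "blk a = (if a < n then 0 else if a < n + m then 1 else (2::nat))" for a
  have dfz: "df a b = 0" if "blk a \<noteq> blk b" for a b
    using that unfolding df_def blk_def by (auto split: if_splits)
  have bi: "blk i' = 2 - blk i" using ci unfolding blk_def by auto
  have bj: "blk j' = 2 - blk j" using cj unfolding blk_def by auto
  have b2: "blk a \<le> 2" for a unfolding blk_def by auto
  show ?thesis
  proof (cases "blk i = blk j")
    case False
    hence "blk i' \<noteq> blk j'" unfolding bi bj using b2[of i] b2[of j] by auto
    thus ?thesis using dfz False by simp
  next
    case True
    show ?thesis
    proof (cases "i < n")
      case c1: True
      hence "j < n" using True unfolding blk_def by (auto split: if_splits)
      thus ?thesis using dA c1 by blast
    next
      case c1: False
      show ?thesis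
      proof (cases "i < n + m")
        case c2: True
        hence "n \<le> j" "j < n + m" using True c1 unfolding blk_def by (auto split: if_splits)
        thus ?thesis using dB c1 c2 by simp
      next
        case c2: False
        hence "n + m \<le> j" using True c1 unfolding blk_def by (auto split: if_splits)
        thus ?thesis using dC c2 by simp
      qed
    qed
  qed
qed

theorem corollary3p6:
  fixes A B :: "real mat" and m n :: nat
    and \<alpha>1 \<beta>1 a b :: real and \<alpha>s \<beta>s :: "complex list"
    and u1 v1 :: "real vec"
  assumes A: "A \<in> carrier_mat m m" "normal_mat A" "centrosymmetric A" "nonneg_mat A"
      and A_eig: "eigenvalues_list A (complex_of_real \<alpha>1 # \<alpha>s)"
      and A_perron: "\<alpha>1 = perron_root A"
      and u1: "u1 \<in> carrier_vec m" "is_unit_vector u1" "nonneg_vec u1"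
              "A *\<^sub>v u1 = \<alpha>1 \<cdot>\<^sub>v u1" "revid m *\<^sub>v u1 = u1"
      and B: "B \<in> carrier_mat n n" "normal_mat B" "centrosymmetric B" "nonneg_mat B"
      and B_eig: "eigenvalues_list B (complex_of_real \<beta>1 # \<beta>s)"
      and B_perron: "\<beta>1 = perron_root B"
      and v1: "v1 \<in> carrier_vec n" "is_unit_vector v1" "nonneg_vec v1"
              "B *\<^sub>v v1 = \<beta>1 \<cdot>\<^sub>v v1" "revid n *\<^sub>v v1 = v1"
      and ge: "\<alpha>1 \<ge> \<beta>1"
      and ab: "\<alpha>1 - \<beta>1 \<ge> a" "a \<ge> b" "a + b \<le> 0"
  shows "\<exists>C. C \<in> carrier_mat (m + 2 * n) (m + 2 * n) \<and> normal_mat C \<and>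
             centrosymmetric C \<and> nonneg_mat C \<and>
             eigenvalues_list C
               ([complex_of_real (\<alpha>1 - (a + b)), complex_of_real (\<beta>1 + a),
                 complex_of_real (\<beta>1 + b)] @ \<alpha>s @ \<beta>s @ \<beta>s)"
proof -
  note Ac = A(1) and Bc = B(1)
  have nA: "A * transpose_mat A = transpose_mat A * A" using A(2) unfolding normal_mat_def .
  have nB: "B * transpose_mat B = transpose_mat B * B" using B(2) unfolding normal_mat_def .
  have ATu: "transpose_mat A *\<^sub>v u1 = \<alpha>1 \<cdot>\<^sub>v u1" by (rule normal_eigvec_transpose[OF Ac nA u1(1) u1(4)])
  have BTv: "transpose_mat B *\<^sub>v v1 = \<beta>1 \<cdot>\<^sub>v v1" by (rule normal_eigvec_transpose[OF Bc nB v1(1) v1(4)])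
  have ATc: "transpose_mat A \<in> carrier_mat m m" and BTc: "transpose_mat B \<in> carrier_mat n n" using Ac Bc by auto
  define N where "N = n + (m + n)"
  define Din where "Din = bdiag A B"
  define D where "D = bdiag B Din"
  have Din: "Din \<in> carrier_mat (m + n) (m + n)" unfolding Din_def using Ac Bc by auto
  have D: "D \<in> carrier_mat N N" unfolding D_def N_def using Din Bc by auto
  have DT: "transpose_mat D = bdiag (transpose_mat B) (bdiag (transpose_mat A) (transpose_mat B))"
    unfolding D_def Din_def
    using bdiag_transpose[OF Bc Din[unfolded Din_def]] bdiag_transpose[OF Ac Bc] Ac Bc by simp
  have DTc: "transpose_mat D \<in> carrier_mat N N" using D by auto
  have nD: "D * transpose_mat D = transpose_mat D * D"
  proof -
    have nDin: "Din * transpose_mat Din = transpose_mat Din * Din"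
      unfolding Din_def by (rule bdiag_normal[OF Ac Bc nA nB])
    show ?thesis unfolding D_def by (rule bdiag_normal[OF Bc Din nB nDin])
  qed
  define w0 where "w0 = 0\<^sub>v n @\<^sub>v (u1 @\<^sub>v 0\<^sub>v n)"
  define w1 where "w1 = v1 @\<^sub>v (0\<^sub>v m @\<^sub>v v1)"
  define w2 where "w2 = v1 @\<^sub>v (0\<^sub>v m @\<^sub>v ((-1) \<cdot>\<^sub>v v1))"
  have w0: "w0 \<in> carrier_vec N" and w1: "w1 \<in> carrier_vec N" and w2: "w2 \<in> carrier_vec N"
    unfolding w0_def w1_def w2_def N_def using u1(1) v1(1) by auto
  have z0: "\<And>(M :: real mat) k e. M \<in> carrier_mat k k \<Longrightarrow> M *\<^sub>v 0\<^sub>v k = e \<cdot>\<^sub>v 0\<^sub>v k"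
    by (rule eq_vecI, auto simp: scalar_prod_def)
  have mv: "\<And>(M :: real mat) k e x. M \<in> carrier_mat k k \<Longrightarrow> x \<in> carrier_vec k \<Longrightarrow> M *\<^sub>v x = e \<cdot>\<^sub>v x
     \<Longrightarrow> M *\<^sub>v ((-1) \<cdot>\<^sub>v x) = e \<cdot>\<^sub>v ((-1) \<cdot>\<^sub>v x)"
    by (auto simp: mult_mat_vec smult_smult_assoc mult.commute)
  have ev: "\<And>M1 M2. M1 \<in> carrier_mat m m \<Longrightarrow> M2 \<in> carrier_mat n n \<Longrightarrow>
      M1 *\<^sub>v u1 = \<alpha>1 \<cdot>\<^sub>v u1 \<Longrightarrow> M2 *\<^sub>v v1 = \<beta>1 \<cdot>\<^sub>v v1 \<Longrightarrow>
      bdiag M2 (bdiag M1 M2) * mat_of_cols N [w0, w1, w2] = mat_of_cols N [w0, w1, w2] * diagm [\<alpha>1, \<beta>1, \<beta>1]"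
  proof -
    fix M1 M2 assume M1: "M1 \<in> carrier_mat m m" and M2: "M2 \<in> carrier_mat n n"
      and e1: "M1 *\<^sub>v u1 = \<alpha>1 \<cdot>\<^sub>v u1" and e2: "M2 *\<^sub>v v1 = \<beta>1 \<cdot>\<^sub>v v1"
    have Mi: "bdiag M1 M2 \<in> carrier_mat (m + n) (m + n)" using M1 M2 by auto
    have M: "bdiag M2 (bdiag M1 M2) \<in> carrier_mat N N" using M1 M2 unfolding N_def by auto
    have zn: "M2 *\<^sub>v 0\<^sub>v n = e \<cdot>\<^sub>v 0\<^sub>v n" for e using z0[OF M2] .
    have zm: "M1 *\<^sub>v 0\<^sub>v m = e \<cdot>\<^sub>v 0\<^sub>v m" for e using z0[OF M1] .
    have i0: "bdiag M1 M2 *\<^sub>v (u1 @\<^sub>v 0\<^sub>v n) = \<alpha>1 \<cdot>\<^sub>v (u1 @\<^sub>v 0\<^sub>v n)"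
      by (rule bdiag_eig[OF M1 M2 u1(1) _ e1 zn], simp)
    have a0: "bdiag M2 (bdiag M1 M2) *\<^sub>v w0 = \<alpha>1 \<cdot>\<^sub>v w0" unfolding w0_def
      by (rule bdiag_eig[OF M2 Mi _ _ zn i0], use u1(1) in auto)
    have i1: "bdiag M1 M2 *\<^sub>v (0\<^sub>v m @\<^sub>v v1) = \<beta>1 \<cdot>\<^sub>v (0\<^sub>v m @\<^sub>v v1)"
      by (rule bdiag_eig[OF M1 M2 _ v1(1) zm e2], simp)
    have a1: "bdiag M2 (bdiag M1 M2) *\<^sub>v w1 = \<beta>1 \<cdot>\<^sub>v w1" unfolding w1_def
      by (rule bdiag_eig[OF M2 Mi v1(1) _ e2 i1], use v1(1) in auto)
    have e2': "M2 *\<^sub>v ((-1) \<cdot>\<^sub>v v1) = \<beta>1 \<cdot>\<^sub>v ((-1) \<cdot>\<^sub>v v1)" by (rule mv[OF M2 v1(1) e2])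
    have i2: "bdiag M1 M2 *\<^sub>v (0\<^sub>v m @\<^sub>v ((-1) \<cdot>\<^sub>v v1)) = \<beta>1 \<cdot>\<^sub>v (0\<^sub>v m @\<^sub>v ((-1) \<cdot>\<^sub>v v1))"
      by (rule bdiag_eig[OF M1 M2 _ _ zm e2'], use v1(1) in auto)
    have a2: "bdiag M2 (bdiag M1 M2) *\<^sub>v w2 = \<beta>1 \<cdot>\<^sub>v w2" unfolding w2_def
      by (rule bdiag_eig[OF M2 Mi v1(1) _ e2 i2], use v1(1) in auto)
    show "bdiag M2 (bdiag M1 M2) * mat_of_cols N [w0, w1, w2] = mat_of_cols N [w0, w1, w2] * diagm [\<alpha>1, \<beta>1, \<beta>1]"
      by (rule mat_cols_eig[OF M], use w0 w1 w2 in simp, simp, use a0 a1 a2 in \<open>auto simp: less_Suc_eq\<close>)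
  qed
  define W where "W = mat_of_cols N [w0, w1, w2]"
  define Lam where "Lam = diagm [\<alpha>1, \<beta>1, \<beta>1]"
  have W: "W \<in> carrier_mat N 3" unfolding W_def by auto
  have Lam: "Lam \<in> carrier_mat 3 3" unfolding Lam_def using diagm_carrier[of "[\<alpha>1, \<beta>1, \<beta>1]"] by (simp add: numeral_3_eq_3)
  have DW: "D * W = W * Lam" unfolding D_def Din_def W_def Lam_def by (rule ev[OF Ac Bc u1(4) v1(4)])
  have DTW: "transpose_mat D * W = W * Lam" unfolding DT W_def Lam_def by (rule ev[OF ATc BTc ATu BTv])
  define d where "d = - b"
  define c2 where "c2 = - (a + b) * (\<alpha>1 - \<beta>1 - a)"
  define k where "k = sqrt (c2 / 2)"
  have c2: "c2 \<ge> 0" unfolding c2_def using ab by (intro mult_nonneg_nonneg, auto)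
  have k0: "k \<ge> 0" unfolding k_def using c2 by auto
  have kk: "2 * (k * k) = c2" unfolding k_def using c2 by simp
  have d0: "d \<ge> 0" unfolding d_def using ab by auto
  define K where "K = mat 3 3 (\<lambda>(i, j). if (i = 0 \<and> j = 1) \<or> (i = 1 \<and> j = 0) then k
     else if i = 1 \<and> j = 1 then d / 2 else if i = 2 \<and> j = 2 then - d / 2 else 0)"
  have K: "K \<in> carrier_mat 3 3" unfolding K_def by auto
  have KT: "transpose_mat K = K" unfolding K_def by (rule eq_matI, auto)
  define C where "C = D + W * K * transpose_mat W"
  have Cc: "C \<in> carrier_mat N N" unfolding C_def using D W K by auto
  have normC: "normal_mat C" unfolding C_def
    by (rule normal_update[OF D W K KT _ nD], simp add: DW DTW)
  have cp: "char_poly C * char_poly Lam = char_poly D * char_poly (Lam + K * (transpose_mat W * W))"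
    unfolding C_def by (rule rank_update_char_poly[OF D W Lam K DW])
  have cpDin: "char_poly Din = char_poly A * char_poly B"
    unfolding Din_def using char_poly_block_diag[OF Ac Bc] Ac Bc by simp
  have cpD: "char_poly D = char_poly B * (char_poly A * char_poly B)"
    unfolding D_def using char_poly_block_diag[OF Bc Din] Bc Din cpDin by simp
  have uu: "u1 \<bullet> u1 = 1" using u1(2) unfolding is_unit_vector_def .
  have vv: "v1 \<bullet> v1 = 1" using v1(2) unfolding is_unit_vector_def .
  have z00: "\<And>k. (0\<^sub>v k :: real vec) \<bullet> 0\<^sub>v k = 0" by simp
  have sp: "\<And>p q s p' q' s'. p \<in> carrier_vec n \<Longrightarrow> q \<in> carrier_vec m \<Longrightarrow> s \<in> carrier_vec n \<Longrightarrow>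
     p' \<in> carrier_vec n \<Longrightarrow> q' \<in> carrier_vec m \<Longrightarrow> s' \<in> carrier_vec n \<Longrightarrow>
     (p @\<^sub>v (q @\<^sub>v s)) \<bullet> (p' @\<^sub>v (q' @\<^sub>v s')) = p \<bullet> p' + (q \<bullet> q' + s \<bullet> s')"
    by (subst scalar_prod_append, auto, subst scalar_prod_append, auto)
  have nv: "((-1) \<cdot>\<^sub>v v1) \<in> carrier_vec n" using v1(1) by auto
  have g00: "w0 \<bullet> w0 = 1" unfolding w0_def by (subst sp, use u1(1) uu in auto)
  have g01: "w0 \<bullet> w1 = 0" unfolding w0_def w1_def by (subst sp, use u1(1) v1(1) in auto)
  have g02: "w0 \<bullet> w2 = 0" unfolding w0_def w2_def by (subst sp, use u1(1) v1(1) in auto)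
  have g10: "w1 \<bullet> w0 = 0" unfolding w0_def w1_def by (subst sp, use u1(1) v1(1) in auto)
  have g11: "w1 \<bullet> w1 = 2" unfolding w1_def by (subst sp, use v1(1) vv in auto)
  have g12: "w1 \<bullet> w2 = 0" unfolding w1_def w2_def by (subst sp, use v1(1) vv in auto)
  have g20: "w2 \<bullet> w0 = 0" unfolding w0_def w2_def by (subst sp, use u1(1) v1(1) in auto)
  have g21: "w2 \<bullet> w1 = 0" unfolding w1_def w2_def by (subst sp, use v1(1) vv in auto)
  have g22: "w2 \<bullet> w2 = 2" unfolding w2_def by (subst sp, use v1(1) vv in auto)
  have G: "transpose_mat W * W = mat 3 3 (\<lambda>(i, j). if i = j then (if i = 0 then 1 else 2) else 0)"
  proof -
    have cW: "col W 0 = w0" "col W 1 = w1" "col W 2 = w2" unfolding W_def using w0 w1 w2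
      by (auto simp: col_mat_of_cols)
    show ?thesis using W
      by (intro eq_matI, auto simp: less_Suc_eq numeral_3_eq_3 cW[unfolded numeral_2_eq_2 One_nat_def] g00 g01 g02 g10 g11 g12 g20 g21 g22)
  qed
  define Tm where "Tm = (mat 3 3 (\<lambda>(i,j). if i = 0 \<and> j = 0 then \<alpha>1 else if i = 0 \<and> j = 1 then 2 * k
     else if i = 1 \<and> j = 0 then k else if i = 1 \<and> j = 1 then \<beta>1 + d else if i = 2 \<and> j = 2 then \<beta>1 - d else 0) :: real mat)"
  have T: "Lam + K * (transpose_mat W * W) = Tm" unfolding G Tm_def K_def Lam_def
    by (rule eq_matI, auto simp: diagm_def scalar_prod_def less3 eval_nat_numeral sum.atLeast0_lessThan_Suc)
  have Tc: "Tm \<in> carrier_mat 3 3" unfolding Tm_def by auto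
  have cpT_pt: "poly (char_poly Tm) x = (x - (\<alpha>1 - (a + b))) * (x - (\<beta>1 + a)) * (x - (\<beta>1 + b))" for x
  proof -
    have c: "x \<cdot>\<^sub>m 1\<^sub>m 3 - Tm \<in> carrier_mat 3 3" using Tc by (intro minus_carrier_mat, auto)
    have "poly (char_poly Tm) x = (x - \<alpha>1) * (x - \<beta>1 - d) * (x - \<beta>1 + d) - 2 * (k * k) * (x - \<beta>1 + d)"
      unfolding poly_char_poly_det[OF Tc] det3[OF c] using Tc
      by (simp add: Tm_def eval_nat_numeral algebra_simps)
    also have "\<dots> = (x - (\<alpha>1 - (a + b))) * (x - (\<beta>1 + a)) * (x - (\<beta>1 + b))"
      unfolding kk c2_def d_def by (simp add: algebra_simps)
    finally show ?thesis .
  qed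
  have cpT: "char_poly Tm = [:- (\<alpha>1 - (a + b)), 1:] * [:- (\<beta>1 + a), 1:] * [:- (\<beta>1 + b), 1:]"
  proof (intro poly_eq_poly_eq_iff[THEN iffD1] ext)
    fix x
    show "poly (char_poly Tm) x = poly ([:- (\<alpha>1 - (a + b)), 1:] * [:- (\<beta>1 + a), 1:] * [:- (\<beta>1 + b), 1:]) x"
      unfolding cpT_pt by (simp add: algebra_simps)
  qed
  have cpLam: "char_poly Lam = [:- \<alpha>1, 1:] * [:- \<beta>1, 1:] * [:- \<beta>1, 1:]"
  proof (intro poly_eq_poly_eq_iff[THEN iffD1] ext)
    fix x
    have c: "x \<cdot>\<^sub>m 1\<^sub>m 3 - Lam \<in> carrier_mat 3 3" using Lam by (intro minus_carrier_mat, auto)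
    show "poly (char_poly Lam) x = poly ([:- \<alpha>1, 1:] * [:- \<beta>1, 1:] * [:- \<beta>1, 1:]) x"
      unfolding poly_char_poly_det[OF Lam] det3[OF c] using Lam
      by (simp add: Lam_def diagm_def eval_nat_numeral algebra_simps)
  qed
  interpret h: map_poly_idom_hom complex_of_real ..
  let ?h = "map_poly complex_of_real"
  have hA0: "?h (char_poly A) = (\<Prod>e\<leftarrow>(complex_of_real \<alpha>1 # \<alpha>s). [:- e, 1:])"
    using A_eig of_real_hom.char_poly_hom[OF Ac] unfolding eigenvalues_list_def by metis
  have hA: "?h (char_poly A) = [:- complex_of_real \<alpha>1, 1:] * (\<Prod>e\<leftarrow>\<alpha>s. [:- e, 1:])"
    unfolding hA0 by simp
  have hB0: "?h (char_poly B) = (\<Prod>e\<leftarrow>(complex_of_real \<beta>1 # \<beta>s). [:- e, 1:])"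
    using B_eig of_real_hom.char_poly_hom[OF Bc] unfolding eigenvalues_list_def by metis
  have hB: "?h (char_poly B) = [:- complex_of_real \<beta>1, 1:] * (\<Prod>e\<leftarrow>\<beta>s. [:- e, 1:])"
    unfolding hB0 by simp
  define pa where "pa = [:- complex_of_real \<alpha>1, 1:]"
  define pb where "pb = [:- complex_of_real \<beta>1, 1:]"
  define PA where "PA = (\<Prod>e\<leftarrow>\<alpha>s. [:- e, 1:])"
  define PB where "PB = (\<Prod>e\<leftarrow>\<beta>s. [:- e, 1:])"
  define M3 where "M3 = (\<Prod>e\<leftarrow>[complex_of_real (\<alpha>1 - (a + b)), complex_of_real (\<beta>1 + a),
                 complex_of_real (\<beta>1 + b)]. [:- e, 1:])"
  define tgt where "tgt = (\<Prod>e\<leftarrow>[complex_of_real (\<alpha>1 - (a + b)), complex_of_real (\<beta>1 + a),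
                 complex_of_real (\<beta>1 + b)] @ \<alpha>s @ \<beta>s @ \<beta>s. [:- e, 1:])"
  have tgt: "tgt = M3 * (PA * (PB * PB))" unfolding tgt_def M3_def PA_def PB_def
    by (simp only: map_append prod_list.append)
  have hT: "?h (char_poly Tm) = M3" unfolding cpT M3_def by (simp add: h.hom_mult algebra_simps)
  have hL: "?h (char_poly Lam) = pa * pb * pb" unfolding cpLam pa_def pb_def by (simp add: h.hom_mult)
  have L0: "pa * pb * pb \<noteq> 0" unfolding pa_def pb_def by auto
  have "?h (char_poly C) * (pa * pb * pb) = ?h (char_poly C * char_poly Lam)" unfolding h.hom_mult hL ..
  also have "\<dots> = ?h (char_poly B) * (?h (char_poly A) * ?h (char_poly B)) * ?h (char_poly Tm)"
    unfolding cp cpD T h.hom_mult ..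
  also have "\<dots> = (pa * pb * pb) * tgt"
    unfolding hA hB hT tgt pa_def[symmetric] pb_def[symmetric] PA_def[symmetric] PB_def[symmetric]
    by (simp only: ac_simps)
  finally have "?h (char_poly C) * (pa * pb * pb) = (pa * pb * pb) * tgt" .
  hence hC: "?h (char_poly C) = tgt" using L0 by (simp add: mult.commute)
  have eigC: "eigenvalues_list C ([complex_of_real (\<alpha>1 - (a + b)), complex_of_real (\<beta>1 + a),
                 complex_of_real (\<beta>1 + b)] @ \<alpha>s @ \<beta>s @ \<beta>s)"
    unfolding eigenvalues_list_def of_real_hom.char_poly_hom[OF Cc] hC tgt_def ..
  have N_eq: "m + 2 * n = N" unfolding N_def by simp
  have Cc': "C \<in> carrier_mat (m + 2 * n) (m + 2 * n)" using Cc unfolding N_eq .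
  define e0 where "e0 t = (if t < n then 0 else if t < n + m then u1 $ (t - n) else 0)" for t
  define e1 where "e1 t = (if t < n then v1 $ t else if t < n + m then 0 else v1 $ (t - n - m))" for t
  define e2 where "e2 t = (if t < n then v1 $ t else if t < n + m then 0 else - v1 $ (t - n - m))" for t
  have we0: "w0 $ t = e0 t" if "t < N" for t
    using that u1(1) unfolding w0_def e0_def N_def by auto
  have we1: "w1 $ t = e1 t" if "t < N" for t
    using that v1(1) unfolding w1_def e1_def N_def by auto
  have we2: "w2 $ t = e2 t" if "t < N" for t
    using that v1(1) unfolding w2_def e2_def N_def by auto
  have Wt: "mat_of_cols N [w0, w1, w2] $$ (t, 0) = e0 t" "mat_of_cols N [w0, w1, w2] $$ (t, Suc 0) = e1 t"
    "mat_of_cols N [w0, w1, w2] $$ (t, Suc (Suc 0)) = e2 t" if "t < N" for t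
    using that by (auto simp: mat_of_cols_def we0 we1 we2)
  have Pij: "(W * K * transpose_mat W) $$ (i, j) = k * (e0 i * e1 j + e1 i * e0 j) + d / 2 * (e1 i * e1 j - e2 i * e2 j)"
    if ij: "i < N" "j < N" for i j
    using ij W K w0 w1 w2
    by (simp add: W_def K_def scalar_prod_def eval_nat_numeral sum.atLeast0_lessThan_Suc Wt algebra_simps)
  have Dij: "D $$ (i, j) = (if i < n then (if j < n then B $$ (i, j) else 0) else if i < n + m then
      (if n \<le> j \<and> j < n + m then A $$ (i - n, j - n) else 0) else (if n + m \<le> j then B $$ (i - n - m, j - n - m) else 0))"
    if ij: "i < N" "j < N" for i j
    using ij Ac Bc unfolding D_def Din_def N_def by auto
  have Cij: "C $$ (i, j) = D $$ (i, j) + (k * (e0 i * e1 j + e1 i * e0 j) + d / 2 * (e1 i * e1 j - e2 i * e2 j))"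
    if ij: "i < N" "j < N" for i j
    unfolding C_def Pij[OF ij, symmetric] using ij D W K by simp
  have u_nn: "u1 $ t \<ge> 0" if "t < m" for t using u1(3) u1(1) that unfolding nonneg_vec_def by auto
  have v_nn: "v1 $ t \<ge> 0" if "t < n" for t using v1(3) v1(1) that unfolding nonneg_vec_def by auto
  have e0_nn: "e0 t \<ge> 0" for t unfolding e0_def using u_nn by auto
  have e1_nn: "e1 t \<ge> 0" if "t < N" for t unfolding e1_def using v_nn that unfolding N_def by auto
  have e21: "\<bar>e2 t\<bar> = e1 t" if "t < N" for t unfolding e1_def e2_def using v_nn that unfolding N_def by auto
  have e22: "e2 i * e2 j \<le> e1 i * e1 j" if "i < N" "j < N" for i j
  proof -
    have "e2 i * e2 j \<le> \<bar>e2 i * e2 j\<bar>" by simp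
    also have "\<dots> = e1 i * e1 j" unfolding abs_mult e21[OF that(1)] e21[OF that(2)] ..
    finally show ?thesis .
  qed
  have D_nn: "D $$ (i, j) \<ge> 0" if ij: "i < N" "j < N" for i j
    unfolding Dij[OF ij] using A(4) B(4) Ac Bc ij unfolding nonneg_mat_def N_def by auto
  have nnC: "nonneg_mat C" unfolding nonneg_mat_def
  proof (intro allI impI)
    fix i j assume i: "i < dim_row C" and j: "j < dim_col C"
    hence ij: "i < N" "j < N" using Cc by auto
    have "0 \<le> k * (e0 i * e1 j + e1 i * e0 j)" using k0 e0_nn e1_nn[OF ij(1)] e1_nn[OF ij(2)] by (intro mult_nonneg_nonneg add_nonneg_nonneg) auto
    moreover have "0 \<le> d / 2 * (e1 i * e1 j - e2 i * e2 j)" using d0 e22[OF ij] by (intro mult_nonneg_nonneg) auto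
    ultimately show "0 \<le> C $$ (i, j)" unfolding Cij[OF ij] using D_nn[OF ij] by linarith
  qed
  have usym: "u1 $ (m - 1 - t) = u1 $ t" if "t < m" for t using u1(5) revid_fix_iff[OF u1(1)] that by auto
  have vsym: "v1 $ (n - 1 - t) = v1 $ t" if "t < n" for t using v1(5) revid_fix_iff[OF v1(1)] that by auto
  have Asym: "A $$ (m - 1 - x, m - 1 - y) = A $$ (x, y)" if "x < m" "y < m" for x y
    using A(3) centrosymmetric_iff[OF Ac] that by auto
  have Bsym: "B $$ (n - 1 - x, n - 1 - y) = B $$ (x, y)" if "x < n" "y < n" for x y
    using B(3) centrosymmetric_iff[OF Bc] that by auto
  have e0s: "e0 (N - 1 - t) = e0 t" if t: "t < N" for t
  proof -
    have "e0 (N - 1 - t) = (if t < n then 0 else if t < n + m then u1 $ (m - 1 - (t - n)) else 0)"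
      unfolding e0_def N_def by (rule refl3[OF t[unfolded N_def] refl, of "\<lambda>_. 0" "\<lambda>x. u1 $ x" "\<lambda>_. 0"])
    also have "\<dots> = e0 t" unfolding e0_def using usym[of "t - n"] by auto
    finally show ?thesis .
  qed
  have e1s: "e1 (N - 1 - t) = e1 t" if t: "t < N" for t
  proof -
    have "e1 (N - 1 - t) = (if t < n then v1 $ (n - 1 - t) else if t < n + m then 0 else v1 $ (n - 1 - (t - n - m)))"
      unfolding e1_def N_def by (rule refl3[OF t[unfolded N_def] refl, of "\<lambda>x. v1 $ x" "\<lambda>_. 0" "\<lambda>x. v1 $ x"])
    also have "\<dots> = e1 t" unfolding e1_def using vsym[of t] vsym[of "t - n - m"] t unfolding N_def by auto
    finally show ?thesis .
  qed
  have e2s: "e2 (N - 1 - t) = - e2 t" if t: "t < N" for t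
  proof -
    have "e2 (N - 1 - t) = (if t < n then - v1 $ (n - 1 - t) else if t < n + m then 0 else v1 $ (n - 1 - (t - n - m)))"
      unfolding e2_def N_def by (rule refl3[OF t[unfolded N_def] refl, of "\<lambda>x. v1 $ x" "\<lambda>_. 0" "\<lambda>x. - v1 $ x"])
    also have "\<dots> = - e2 t" unfolding e2_def using vsym[of t] vsym[of "t - n - m"] t unfolding N_def by auto
    finally show ?thesis .
  qed
  have Ds: "D $$ (N - 1 - i, N - 1 - j) = D $$ (i, j)" if ij: "i < N" "j < N" for i j
  proof -
    have ij': "N - 1 - i < N" "N - 1 - j < N" using ij by auto
    show ?thesis unfolding Dij[OF ij] Dij[OF ij']
      by (rule dform_sym[where F = "\<lambda>a b. B $$ (a, b)" and G = "\<lambda>a b. A $$ (a, b)",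
            OF ij(1)[unfolded N_def] _ ij(2)[unfolded N_def] _ Bsym Asym], auto simp: N_def)
  qed
  have csC: "centrosymmetric C" unfolding centrosymmetric_iff[OF Cc'] N_eq
  proof (intro allI impI)
    fix i j assume i: "i < N" and j: "j < N"
    have ij': "N - 1 - i < N" "N - 1 - j < N" using i j by auto
    show "C $$ (N - 1 - i, N - 1 - j) = C $$ (i, j)"
      unfolding Cij[OF i j] Cij[OF ij'] Ds[OF i j] e0s[OF i] e0s[OF j] e1s[OF i] e1s[OF j] e2s[OF i] e2s[OF j]
      by simp
  qed
  show ?thesis using Cc' normC csC nnC eigC by blast
qed

end
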